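(* Let $n\ge2$ and let $f:\mathbb{R}\to\mathbb{R}$ be a transcendental entire function, $f(z)=\sum_{j\ge0}c_jz^j$ with real $c_j$ and infinite radius of convergence. Then its extension $\mathfrak{f}(A)=\sum_{j\ge0}c_jA^j$ on $\mathbb{R}^{n\times n}$ does not have the Maillet property, i.e. there exists $A\in\mathscr{L}_{n,n}$ with $\mathfrak{f}(A)\notin\mathscr{L}_{n,n}$.
   Context: A function $f$ is transcendental if $P(z,f(z))\not\equiv0$ for every nonzero polynomial $P(X,Y)\in\mathbb{C}[X,Y]$. $\Vert\cdot\Vert$ is the supremum norm; a real $m\times n$ matrix $A$ is a Liouville matrix if $A\mathbf{q}-\mathbf{p}\neq\mathbf{0}$ for all nonzero $(\mathbf{q},\mathbf{p})\in\mathbb{Z}^n\times\mathbb{Z}^m$ and for every $N$ there exist $\mathbf{p}\in\mathbb{Z}^m$, $\mathbf{q}\in\mathbb{Z}^n\setminus\{\mathbf{0}\}$ with $\Vert A\mathbf{q}-\mathbf{p}\Vert<\Vert\mathbf{q}\Vert^{-N}$; $\mathscr{L}_{m,n}$ is the set of these. A matrix function $\mathfrak{f}$ has the Maillet property (in dimension $n$) if $\mathfrak{f}(\mathscr{L}_{n,n})\subseteq\mathscr{L}_{n,n}$. *)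

theory Defs
  imports "HOL-Analysis.Analysis" "HOL-Computational_Algebra.Polynomial"
begin

definition supnorm :: "real ^ 'n \<Rightarrow> real" where
  "supnorm x = Max (range (\<lambda>i. \<bar>x $ i\<bar>))"

definition int_vec :: "real ^ 'n \<Rightarrow> bool" where
  "int_vec x \<longleftrightarrow> (\<forall>i. x $ i \<in> \<int>)"

text \<open>Liouville matrices (real m x n matrices, rows indexed by 'm, columns by 'n).\<close>
definition liouville_matrix :: "real ^ 'n ^ 'm \<Rightarrow> bool" where
  "liouville_matrix A \<longleftrightarrow>
     (\<forall>q p. int_vec q \<and> int_vec p \<and> (q \<noteq> 0 \<or> p \<noteq> 0) \<longrightarrow> A *v q - p \<noteq> 0) \<and>
     (\<forall>N::nat. \<exists>p q. int_vec p \<and> int_vec q \<and> q \<noteq> 0 \<and>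
        supnorm (A *v q - p) < 1 / supnorm q ^ N)"

primrec mat_pow :: "real ^ 'n ^ 'n \<Rightarrow> nat \<Rightarrow> real ^ 'n ^ 'n" where
  "mat_pow A 0 = mat 1"
| "mat_pow A (Suc k) = A ** mat_pow A k"

definition mat_fun :: "(nat \<Rightarrow> real) \<Rightarrow> real ^ 'n ^ 'n \<Rightarrow> real ^ 'n ^ 'n" where
  "mat_fun c A = (\<Sum>j. c j *\<^sub>R mat_pow A j)"

definition entire_fun :: "(nat \<Rightarrow> real) \<Rightarrow> complex \<Rightarrow> complex" where
  "entire_fun c z = (\<Sum>j. complex_of_real (c j) * z ^ j)"

text \<open>Transcendence: a bivariate polynomial P in C[X,Y] is represented as a polynomial
  in Y with coefficients in C[X]; P(z, f z) = 0 identically forces P = 0.\<close>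
definition transcendental_fun :: "(complex \<Rightarrow> complex) \<Rightarrow> bool" where
  "transcendental_fun f \<longleftrightarrow>
     (\<forall>P :: complex poly poly. P \<noteq> 0 \<longrightarrow>
        \<not> (\<forall>z. poly (map_poly (\<lambda>q. poly q z) P) (f z) = 0))"

end

theory Submission
  imports Defs "HOL-Complex_Analysis.Conformal_Mappings"
begin

definition Pf :: "(nat \<Rightarrow> real) \<Rightarrow> complex poly poly \<Rightarrow> complex \<Rightarrow> complex" where
  "Pf c P z = poly (map_poly (\<lambda>q. poly q z) P) (entire_fun c z)"

lemma entire_holo:
  assumes entire: "\<forall>z::complex. summable (\<lambda>j. complex_of_real (c j) * z ^ j)"
  shows "entire_fun c holomorphic_on UNIV"
proof -
  have "\<And>x. ((\<lambda>z. \<Sum>j. complex_of_real (c j) * z ^ j) has_field_derivative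
      (\<Sum>n. diffs (\<lambda>j. complex_of_real (c j)) n * x^n)) (at x)"
    by (rule termdiffs_strong_converges_everywhere) (use entire in auto)
  then show ?thesis
    unfolding holomorphic_on_def entire_fun_def field_differentiable_def
    by (metis has_field_derivative_at_within)
qed

lemma Pf_holo:
  assumes entire: "\<forall>z::complex. summable (\<lambda>j. complex_of_real (c j) * z ^ j)"
  shows "Pf c P holomorphic_on UNIV"
proof (induction P rule: pCons_induct)
  case 0
  then show ?case by (simp add: Pf_def)
next
  case (pCons a p)
  have eq: "Pf c (pCons a p) = (\<lambda>z. poly a z + entire_fun c z * Pf c p z)"
    by (auto simp: Pf_def map_poly_pCons)
  show ?case unfolding eq
    using pCons entire_holo[OF entire] poly_holomorphic_on[of "\<lambda>z. z" UNIV a]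
    by (intro holomorphic_intros) auto
qed

lemma Pf_open:
  assumes entire: "\<forall>z::complex. summable (\<lambda>j. complex_of_real (c j) * z ^ j)"
  shows "open {x::real. Pf c P (of_real x) \<noteq> 0}"
proof -
  have h: "continuous_on UNIV (Pf c P)"
    by (rule holomorphic_on_imp_continuous_on[OF Pf_holo[OF entire]])
  have o: "continuous_on UNIV (\<lambda>x::real. complex_of_real x)"
    by (intro continuous_intros)
  have "continuous_on UNIV (Pf c P \<circ> (\<lambda>x::real. complex_of_real x))"
    by (rule continuous_on_compose[OF o continuous_on_subset[OF h]]) auto
  then have "continuous_on UNIV (\<lambda>x::real. Pf c P (of_real x))" by (simp add: o_def)
  then show ?thesis by (rule open_Collect_neq) auto
qed

lemma Pf_dense:
  assumes entire: "\<forall>z::complex. summable (\<lambda>j. complex_of_real (c j) * z ^ j)"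
    and transc: "transcendental_fun (entire_fun c)" and P: "P \<noteq> 0"
  shows "closure {x::real. Pf c P (of_real x) \<noteq> 0} = UNIV"
proof (rule ccontr)
  assume "closure {x::real. Pf c P (of_real x) \<noteq> 0} \<noteq> UNIV"
  then obtain x0 where "x0 \<notin> closure {x::real. Pf c P (of_real x) \<noteq> 0}" by auto
  then obtain e where e: "e > 0" and z: "\<And>y. dist y x0 < e \<Longrightarrow> Pf c P (of_real y) = 0"
    unfolding closure_approachable by auto
  have "Pf c P w = 0" for w
  proof (rule analytic_continuation[OF Pf_holo[OF entire] open_UNIV connected_UNIV,
        of "of_real ` ball x0 e" "of_real x0"])
    show "of_real x0 islimpt (of_real ` ball x0 e :: complex set)"
      unfolding islimpt_approachable
    proof (intro allI impI)
      fix d :: real assume d: "d > 0"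
      define y where "y = x0 + min d e / 2"
      have "y \<in> ball x0 e" using d e by (auto simp: dist_real_def y_def)
      moreover have "complex_of_real y \<noteq> of_real x0" using d e by (auto simp: y_def)
      moreover have "dist (complex_of_real y) (of_real x0) < d"
        unfolding dist_of_real using d e by (simp add: dist_real_def y_def)
      ultimately show "\<exists>x'\<in>(of_real ` ball x0 e :: complex set). x' \<noteq> of_real x0 \<and> dist x' (of_real x0) < d"
        by blast
    qed
  qed (use z in \<open>auto simp: dist_commute\<close>)
  then show False using transc P unfolding transcendental_fun_def Pf_def by blast
qed

definition Uset :: "nat \<Rightarrow> real set" where
  "Uset N = {x. \<exists>k m::int. k \<noteq> 0 \<and> \<bar>of_int k * x - of_int m\<bar> < 1 / \<bar>of_int k\<bar> ^ N}"

lemma Uset_open: "open (Uset N)"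
proof -
  have "Uset N = (\<Union>km\<in>{km::int\<times>int. fst km \<noteq> 0}.
      {x. \<bar>of_int (fst km) * x - of_int (snd km)\<bar> < 1 / \<bar>of_int (fst km)\<bar> ^ N})"
    unfolding Uset_def by force
  moreover have "open {x::real. \<bar>of_int (fst km) * x - of_int (snd km)\<bar> < 1 / \<bar>of_int (fst km)\<bar> ^ N}" for km :: "int \<times> int"
    by (intro open_Collect_less continuous_intros)
  ultimately show ?thesis by (metis (no_types, lifting) open_UN)
qed

lemma Uset_dense: "closure (Uset N) = UNIV"
proof -
  have "\<rat> \<subseteq> Uset N"
  proof
    fix x :: real assume "x \<in> \<rat>"
    then obtain a b where b: "b > 0" and x: "x = of_int a / of_int b" by (rule Rats_cases')
    have "\<bar>of_int b * x - of_int a\<bar> = 0" using b x by simp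
    moreover have "(0::real) < 1 / \<bar>of_int b\<bar> ^ N" using b by simp
    ultimately show "x \<in> Uset N" unfolding Uset_def using b
      by (intro CollectI exI[of _ b] exI[of _ a]) auto
  qed
  then show ?thesis using Rats_closure_real closure_mono by blast
qed

lemma exists_good_L:
  assumes entire: "\<forall>z::complex. summable (\<lambda>j. complex_of_real (c j) * z ^ j)"
    and transc: "transcendental_fun (entire_fun c)"
    and cP: "countable PP" and nz: "0 \<notin> PP"
  shows "\<exists>L::real. (\<forall>N. L \<in> Uset N) \<and> (\<forall>P\<in>PP. Pf c P (of_real L) \<noteq> 0)"
proof -
  define G where "G = range Uset \<union> (\<lambda>P. {x::real. Pf c P (of_real x) \<noteq> 0}) ` PP"
  have "countable G" unfolding G_def using cP by auto
  moreover have "openin (top_of_set UNIV) T \<and> UNIV \<subseteq> closure T" if "T \<in> G" for T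
    using that nz Uset_open Uset_dense Pf_open[OF entire] Pf_dense[OF entire transc]
    unfolding G_def by (metis (no_types, lifting) Un_iff imageE rangeE open_openin subset_UNIV subtopology_UNIV)
  ultimately have "(UNIV::real set) \<subseteq> closure (\<Inter>G)"
    by (intro Baire) auto
  then have "\<Inter>G \<noteq> {}" by auto
  then obtain L where "L \<in> \<Inter>G" by auto
  then have "\<forall>N. L \<in> Uset N" "\<forall>P\<in>PP. Pf c P (of_real L) \<noteq> 0" unfolding G_def by auto
  then show ?thesis by blast
qed

lemma Pf_const: "Pf c (pCons p0 0) z = poly p0 z"
  by (simp add: Pf_def map_poly_pCons)

lemma Pf_lin: "Pf c (pCons p0 (pCons p1 0)) z = poly p0 z + entire_fun c z * poly p1 z"
  by (simp add: Pf_def map_poly_pCons)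

lemma mat_pow_A:
  fixes \<xi> L s :: real and i0 i1 :: "'n::finite"
  assumes ne: "i0 \<noteq> i1" and xl: "\<xi> \<noteq> L"
    and A: "A = (\<chi> i j. if i = j then (if i = i0 then \<xi> else L) else if i = i1 \<and> j = i0 then s else 0)"
  shows "mat_pow A k = (\<chi> i j. if i = j then (if i = i0 then \<xi>^k else L^k)
            else if i = i1 \<and> j = i0 then s * ((\<xi>^k - L^k) / (\<xi> - L)) else 0)"
proof (induction k)
  case 0
  show ?case by (simp add: mat_def vec_eq_iff)
next
  case (Suc k)
  define M where "M = mat_pow A k"
  define a where "a = (\<lambda>i. if i = i0 then \<xi> else L)"
  have Ail: "A $ i $ l = (if l = i then a i else 0) + (if i = i1 \<and> l = i0 then s else 0)" for i l
    using ne by (auto simp: A a_def)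
  have prod: "(A ** M) $ i $ j = a i * M $ i $ j + (if i = i1 then s * M $ i0 $ j else 0)" for i j
  proof -
    have "(A ** M) $ i $ j = (\<Sum>l\<in>UNIV. ((if l = i then a i else 0) + (if i = i1 \<and> l = i0 then s else 0)) * M $ l $ j)"
      by (simp add: matrix_matrix_mult_def Ail)
    also have "\<dots> = (\<Sum>l\<in>UNIV. (if l = i then a i * M $ l $ j else 0)) + (\<Sum>l\<in>UNIV. (if i = i1 \<and> l = i0 then s * M $ l $ j else 0))"
      unfolding sum.distrib[symmetric] by (rule sum.cong) (auto simp: distrib_right)
    also have "\<dots> = a i * M $ i $ j + (if i = i1 then s * M $ i0 $ j else 0)"
      by (cases "i = i1") auto
    finally show ?thesis .
  qed
  have "mat_pow A (Suc k) $ i $ j = (if i = j then (if i = i0 then \<xi>^Suc k else L^Suc k)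
            else if i = i1 \<and> j = i0 then s * ((\<xi>^Suc k - L^Suc k) / (\<xi> - L)) else 0)" for i j
  proof -
    have d: "\<xi> - L \<noteq> 0" using xl by simp
    have "mat_pow A (Suc k) $ i $ j = a i * M $ i $ j + (if i = i1 then s * M $ i0 $ j else 0)"
      using prod by (simp add: M_def)
    also have "\<dots> = (if i = j then (if i = i0 then \<xi>^Suc k else L^Suc k)
            else if i = i1 \<and> j = i0 then s * ((\<xi>^Suc k - L^Suc k) / (\<xi> - L)) else 0)"
      using ne d unfolding M_def Suc.IH a_def
      by (auto simp: field_simps)
    finally show ?thesis .
  qed
  then show ?case by (simp add: vec_eq_iff)
qed

lemma mat_fun_A:
  fixes \<xi> L s :: real and i0 i1 :: "'n::finite"
  assumes ne: "i0 \<noteq> i1" and xl: "\<xi> \<noteq> L"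
    and A: "A = (\<chi> i j. if i = j then (if i = i0 then \<xi> else L) else if i = i1 \<and> j = i0 then s else 0)"
    and sx: "(\<lambda>k. c k * \<xi> ^ k) sums fx" and sl: "(\<lambda>k. c k * L ^ k) sums fl"
  shows "mat_fun c A = (\<chi> i j. if i = j then (if i = i0 then fx else fl)
            else if i = i1 \<and> j = i0 then s * ((fx - fl) / (\<xi> - L)) else 0)" (is "_ = ?M")
proof -
  have ent: "(\<lambda>k. (c k *\<^sub>R mat_pow A k) $ i $ j) sums (?M $ i $ j)" for i j
  proof -
    have e: "(c k *\<^sub>R mat_pow A k) $ i $ j = (if i = j then (if i = i0 then c k * \<xi>^k else c k * L^k)
            else if i = i1 \<and> j = i0 then s * ((c k * \<xi>^k - c k * L^k) / (\<xi> - L)) else 0)" for k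
      by (simp add: mat_pow_A[OF ne xl A] field_simps)
    have "(\<lambda>k. s * ((c k * \<xi>^k - c k * L^k) / (\<xi> - L))) sums (s * ((fx - fl) / (\<xi> - L)))"
      by (intro sums_mult sums_divide sums_diff sx sl)
    then show ?thesis unfolding e using sx sl by auto
  qed
  have "(\<lambda>k. c k *\<^sub>R mat_pow A k) sums ?M"
    unfolding sums_def
  proof (rule vec_tendstoI)
    fix i
    show "((\<lambda>n. (\<Sum>k<n. c k *\<^sub>R mat_pow A k) $ i) \<longlongrightarrow> ?M $ i) sequentially"
    proof (rule vec_tendstoI)
      fix j
      show "((\<lambda>n. (\<Sum>k<n. c k *\<^sub>R mat_pow A k) $ i $ j) \<longlongrightarrow> ?M $ i $ j) sequentially"
        using ent[of i j] unfolding sums_def by simp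
    qed
  qed
  then show ?thesis unfolding mat_fun_def by (rule sums_unique[symmetric])
qed

lemma mv_B:
  fixes i0 i1 :: "'n::finite" and t :: real
  assumes ne: "i0 \<noteq> i1"
  shows "((\<chi> i j. if i = j then b i else if i = i1 \<and> j = i0 then t else 0) *v q) $ i
     = b i * q $ i + (if i = i1 then t * q $ i0 else 0)"
proof -
  have "((\<chi> i j. if i = j then b i else if i = i1 \<and> j = i0 then t else 0) *v q) $ i
      = (\<Sum>l\<in>UNIV. (if l = i then b i * q $ l else 0) + (if i = i1 \<and> l = i0 then t * q $ l else 0))"
    unfolding matrix_vector_mult_def using ne by (auto intro!: sum.cong)
  also have "\<dots> = b i * q $ i + (if i = i1 then t * q $ i0 else 0)"
    unfolding sum.distrib by (cases "i = i1") auto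
  finally show ?thesis .
qed

lemma supnorm_single:
  fixes i1 :: "'n::finite"
  shows "supnorm (\<chi> i. if i = i1 then x else 0) = \<bar>x\<bar>"
  unfolding supnorm_def
  by (rule Max_eqI) auto

lemma A_liouville:
  fixes \<xi> L s :: real and i0 i1 :: "'n::finite"
  assumes ne: "i0 \<noteq> i1"
    and A: "A = (\<chi> i j. if i = j then (if i = i0 then \<xi> else L) else if i = i1 \<and> j = i0 then s else 0)"
    and h1: "\<And>q2 m::int. q2 \<noteq> 0 \<Longrightarrow> L * of_int q2 \<noteq> of_int m"
    and h2: "\<And>q1 q2 m::int. q1 \<noteq> 0 \<Longrightarrow> s * of_int q1 + L * of_int q2 \<noteq> of_int m"
    and h3: "\<And>N. L \<in> Uset N"
  shows "liouville_matrix A"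
proof -
  have mv: "(A *v q) $ i = (if i = i0 then \<xi> else L) * q $ i + (if i = i1 then s * q $ i0 else 0)" for q i
    using mv_B[OF ne, of "\<lambda>i. if i = i0 then \<xi> else L" s q i] by (simp add: A)
  have part1: "A *v q - p \<noteq> 0" if q: "int_vec q" and p: "int_vec p" and qp: "q \<noteq> 0 \<or> p \<noteq> 0" for q p
  proof
    assume "A *v q - p = 0"
    then have eq: "A *v q = p" by simp
    show False
    proof (cases "q = 0")
      case True
      then have "p = 0" using eq by simp
      then show False using True qp by simp
    next
      case False
      then obtain j where j: "q $ j \<noteq> 0" by (metis vec_eq_iff zero_index)
      show False
      proof (cases "q $ i0 = 0")
        case True
        then have ji: "j \<noteq> i0" using j by auto
        have "p $ j = L * q $ j" using eq[symmetric] mv[of q j] ji True by auto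
        moreover obtain a where a: "q $ j = of_int a" using q unfolding int_vec_def by (meson Ints_cases)
        moreover obtain b where b: "p $ j = of_int b" using p unfolding int_vec_def by (meson Ints_cases)
        ultimately show False using h1[of a b] j by auto
      next
        case False
        have "p $ i1 = L * q $ i1 + s * q $ i0" using eq[symmetric] mv[of q i1] ne by auto
        moreover obtain a where a: "q $ i0 = of_int a" using q unfolding int_vec_def by (meson Ints_cases)
        moreover obtain a2 where a2: "q $ i1 = of_int a2" using q unfolding int_vec_def by (meson Ints_cases)
        moreover obtain b where b: "p $ i1 = of_int b" using p unfolding int_vec_def by (meson Ints_cases)
        ultimately show False using h2[of a a2 b] False by (auto simp: algebra_simps)
      qed
    qed
  qed
  have part2: "\<exists>p q. int_vec p \<and> int_vec q \<and> q \<noteq> 0 \<and> supnorm (A *v q - p) < 1 / supnorm q ^ N" for N :: nat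
  proof -
    obtain k m :: int where k: "k \<noteq> 0" and km: "\<bar>of_int k * L - of_int m\<bar> < 1 / \<bar>of_int k\<bar> ^ N"
      using h3[of N] unfolding Uset_def by auto
    define q :: "real ^ 'n" where "q = (\<chi> i. if i = i1 then of_int k else 0)"
    define p :: "real ^ 'n" where "p = (\<chi> i. if i = i1 then of_int m else 0)"
    have "A *v q - p = (\<chi> i. if i = i1 then of_int k * L - of_int m else 0)"
      using ne by (auto simp: vec_eq_iff mv q_def p_def)
    then have "supnorm (A *v q - p) = \<bar>of_int k * L - of_int m\<bar>" by (simp add: supnorm_single)
    moreover have "supnorm q = \<bar>of_int k\<bar>" unfolding q_def by (rule supnorm_single)
    moreover have "int_vec p" "int_vec q" unfolding int_vec_def p_def q_def by auto
    moreover have "q \<noteq> 0" using k by (auto simp: q_def vec_eq_iff)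
    ultimately show ?thesis using km by metis
  qed
  show ?thesis unfolding liouville_matrix_def using part1 part2 by blast
qed

lemma M_not_liouville:
  fixes i0 i1 :: "'n::finite" and a d :: int
  assumes ne: "i0 \<noteq> i1" and d: "d > 0"
    and M: "M = (\<chi> i j. if i = j then (if i = i0 then of_int a / of_int d else fl) else if i = i1 \<and> j = i0 then t else 0)"
    and t: "t * of_int d = 1"
  shows "\<not> liouville_matrix M"
proof -
  have mv: "(M *v q) $ i = (if i = i0 then of_int a / of_int d else fl) * q $ i + (if i = i1 then t * q $ i0 else 0)" for q i
    using mv_B[OF ne, of "\<lambda>i. if i = i0 then of_int a / of_int d else fl" t q i] by (simp add: M)
  define q :: "real ^ 'n" where "q = (\<chi> i. if i = i0 then of_int d else 0)"
  define p :: "real ^ 'n" where "p = (\<chi> i. if i = i0 then of_int a else if i = i1 then 1 else 0)"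
  have "M *v q - p = 0" using ne d t by (auto simp: vec_eq_iff mv q_def p_def)
  moreover have "int_vec p" "int_vec q" unfolding int_vec_def p_def q_def by auto
  moreover have "q \<noteq> 0" using d by (auto simp: q_def vec_eq_iff)
  ultimately show ?thesis unfolding liouville_matrix_def by blast
qed

theorem mainTheorem4:
  fixes c :: "nat \<Rightarrow> real"
  assumes n2: "CARD('n::finite) \<ge> 2"
    and entire: "\<forall>z::complex. summable (\<lambda>j. complex_of_real (c j) * z ^ j)"
    and transc: "transcendental_fun (entire_fun c)"
  shows "\<exists>A :: real ^ 'n ^ 'n. liouville_matrix A \<and> \<not> liouville_matrix (mat_fun c A)"
proof -
  obtain i0 i1 :: 'n where ne: "i0 \<noteq> i1"
  proof -
    have "\<not> (\<forall>i j::'n. i = j)"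
    proof
      assume "\<forall>i j::'n. i = j"
      then have "(UNIV::'n set) \<subseteq> {undefined}" by auto
      then have "CARD('n) \<le> 1" by (metis card.empty card.insert card_mono empty_iff finite.intros(1) finite_insert One_nat_def)
      then show False using n2 by simp
    qed
    then show ?thesis using that by blast
  qed
  define fr where "fr x = (\<Sum>j. c j * x ^ j)" for x :: real
  have sums_fr: "(\<lambda>j. c j * x ^ j) sums fr x" for x
  proof -
    have eqf: "(\<lambda>j. complex_of_real (c j) * of_real x ^ j) = (\<lambda>j. complex_of_real (c j * x ^ j))"
      by simp
    have "summable (\<lambda>j. complex_of_real (c j * x ^ j))"
      using entire[rule_format, of "of_real x"] by (simp only: eqf)
    then have "summable (\<lambda>j. c j * x ^ j)" by (simp only: summable_of_real_iff)
    then show ?thesis unfolding fr_def by (rule summable_sums)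
  qed
  have ef: "entire_fun c (of_real x) = of_real (fr x)" for x
  proof -
    have "(\<lambda>j. complex_of_real (c j * x ^ j)) sums of_real (fr x)"
      using sums_fr[of x] by (simp only: sums_of_real_iff)
    then show ?thesis unfolding entire_fun_def by (simp add: sums_iff)
  qed
  have cont: "continuous_on UNIV fr"
  proof -
    have h: "continuous_on UNIV (entire_fun c)"
      by (rule holomorphic_on_imp_continuous_on[OF entire_holo[OF entire]])
    have o: "continuous_on UNIV (\<lambda>x::real. complex_of_real x)"
      by (intro continuous_intros)
    have "continuous_on UNIV (entire_fun c \<circ> (\<lambda>x::real. complex_of_real x))"
      by (rule continuous_on_compose[OF o continuous_on_subset[OF h]]) auto
    then have "continuous_on UNIV (\<lambda>x. Re (entire_fun c (of_real x)))"
      by (intro continuous_intros) (simp add: o_def)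
    then show ?thesis by (simp add: ef)
  qed
  obtain x1 where x1: "fr x1 \<noteq> fr 0"
  proof -
    define P0 :: "complex poly poly" where "P0 = pCons [:- of_real (fr 0):] (pCons 1 0)"
    have "P0 \<noteq> 0" by (simp add: P0_def)
    then have "closure {x::real. Pf c P0 (of_real x) \<noteq> 0} = UNIV" by (rule Pf_dense[OF entire transc])
    then obtain x where "Pf c P0 (of_real x) \<noteq> 0" by fastforce
    then have "fr x \<noteq> fr 0" by (simp add: P0_def Pf_lin Pf_const ef)
    then show ?thesis using that by blast
  qed
  obtain r where r: "r \<in> \<rat>" "min (fr 0) (fr x1) < r" "r < max (fr 0) (fr x1)"
  proof -
    have "min (fr 0) (fr x1) < max (fr 0) (fr x1)" using x1 by (auto simp: min_def max_def)
    from Rats_dense_in_real[OF this] show ?thesis using that by blast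
  qed
  have "r \<in> closed_segment (fr 0) (fr x1)"
    using r by (auto simp: closed_segment_eq_real_ivl)
  then obtain \<xi> where fxi: "fr \<xi> = r"
    using IVT'_closed_segment_real[of r fr 0 x1] continuous_on_subset[OF cont] by blast
  obtain a d :: int where d: "d > 0" and rad: "r = of_int a / of_int d"
    using r(1) by (rule Rats_cases')
  define Pirr :: "int \<times> int \<Rightarrow> complex poly poly" where
    "Pirr = (\<lambda>(q2, m). pCons [:- of_int m, of_int q2:] (pCons 0 0))"
  define Pxi :: "complex poly poly" where "Pxi = pCons [:- of_real \<xi>, 1:] (pCons 0 0)"
  define Pr :: "complex poly poly" where "Pr = pCons [:- of_real r:] (pCons 1 0)"
  define Ph :: "int \<times> int \<times> int \<Rightarrow> complex poly poly" where
    "Ph = (\<lambda>(q1, q2, m). pCons [: of_int q1 * of_real \<xi> - of_int d * of_real r * of_int m,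
                                 of_int d * of_real r * of_int q2 - of_int q1 :]
                          (pCons [: of_int d * of_int m, - (of_int d * of_int q2) :] 0))"
  define PP where "PP = ({Pxi, Pr} \<union> range Pirr \<union> range Ph) - {0}"
  have "countable ({Pxi, Pr} \<union> range Pirr \<union> range Ph)"
    by (intro countable_Un countable_insert countable_empty countable_image countableI_type)
  then have cPP: "countable PP" unfolding PP_def by (rule countable_subset[rotated]) blast
  have nPP: "0 \<notin> PP" unfolding PP_def by blast
  obtain L where LU: "\<And>N. L \<in> Uset N" and LP: "\<And>P. P \<in> PP \<Longrightarrow> Pf c P (of_real L) \<noteq> 0"
    using exists_good_L[OF entire transc cPP nPP] by metis
  have "Pxi \<in> PP" unfolding PP_def Pxi_def by auto
  from LP[OF this] have Lxi: "\<xi> \<noteq> L" by (auto simp: Pxi_def Pf_lin Pf_const)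
  have "Pr \<in> PP" unfolding PP_def Pr_def by auto
  from LP[OF this] have Lr: "fr L \<noteq> r" by (auto simp: Pr_def Pf_lin Pf_const ef)
  have h1: "L * of_int q2 \<noteq> of_int m" if q2: "q2 \<noteq> 0" for q2 m :: int
  proof -
    have "Pirr (q2, m) \<in> PP" unfolding PP_def Pirr_def using q2 by auto
    from LP[OF this] have "complex_of_real L * complex_of_int q2 \<noteq> complex_of_int m"
      by (simp add: Pirr_def Pf_lin Pf_const)
    then show ?thesis by (metis of_real_mult of_real_of_int_eq)
  qed
  define s where "s = (\<xi> - L) / (of_int d * (r - fr L))"
  have Dnz: "of_int d * (r - fr L) \<noteq> 0" using d Lr by simp
  have h2: "s * of_int q1 + L * of_int q2 \<noteq> of_int m" if q1: "q1 \<noteq> 0" for q1 q2 m :: int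
  proof
    assume eq: "s * of_int q1 + L * of_int q2 = of_int m"
    have "Ph (q1, q2, m) \<noteq> 0"
    proof (cases "q2 = 0")
      case True then show ?thesis using q1 by (simp add: Ph_def)
    next
      case False then show ?thesis using d by (simp add: Ph_def)
    qed
    then have "Ph (q1, q2, m) \<in> PP" unfolding PP_def by blast
    from LP[OF this] have ne0: "Pf c (Ph (q1, q2, m)) (of_real L) \<noteq> 0" .
    have val: "Pf c (Ph (q1, q2, m)) (of_real L) =
        of_real (of_int q1 * (\<xi> - L) + of_int d * (r - fr L) * (of_int q2 * L - of_int m))"
      by (simp add: Ph_def Pf_lin ef) algebra
    have "of_int q1 * (\<xi> - L) + of_int d * (r - fr L) * (of_int q2 * L - of_int m) = 0"
    proof -
      have "of_int q1 * (\<xi> - L) = of_int d * (r - fr L) * (s * of_int q1)"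
        using Dnz by (simp add: s_def field_simps)
      also have "\<dots> = of_int d * (r - fr L) * (of_int m - L * of_int q2)" using eq by simp
      finally show ?thesis by (simp add: algebra_simps)
    qed
    then show False using ne0 val by simp
  qed
  define A :: "real ^ 'n ^ 'n" where
    "A = (\<chi> i j. if i = j then (if i = i0 then \<xi> else L) else if i = i1 \<and> j = i0 then s else 0)"
  have LA: "liouville_matrix A"
    by (rule A_liouville[OF ne A_def h1 h2 LU])
  have MA: "mat_fun c A = (\<chi> i j. if i = j then (if i = i0 then r else fr L)
            else if i = i1 \<and> j = i0 then s * ((r - fr L) / (\<xi> - L)) else 0)"
    using mat_fun_A[OF ne Lxi A_def, of c r "fr L"] sums_fr[of \<xi>] sums_fr[of L] fxi by simp
  have t: "s * ((r - fr L) / (\<xi> - L)) * of_int d = 1"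
  proof -
    have "(\<xi> - L) \<noteq> 0" "(r - fr L) \<noteq> 0" "(of_int d::real) \<noteq> 0" using Lxi Lr d by auto
    then show ?thesis by (simp add: s_def divide_simps)
  qed
  have "\<not> liouville_matrix (mat_fun c A)"
    by (rule M_not_liouville[OF ne d _ t, where a = a and fl = "fr L"]) (simp only: MA rad)
  then show ?thesis using LA by blast
qed

end
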